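(* In the setting of the context, write $\det(zI_q-\hat{E}(\kappa))=\sum_{\ell=-\bar r}^{\bar p}d_\ell(z)\kappa^\ell$ with $d_{-\bar r}\not\equiv 0$ and $d_{\bar p}\not\equiv 0$. Then $$\bar r\leq\sum_{i:\,c_i>0}c_i\qquad\text{and}\qquad \bar p\leq-\sum_{i:\,c_i<0}c_i.$$
   Context: Fix an integer $q\geq 2$, integer velocities $c_1,\dots,c_q\in\mathbb{Z}$, an invertible matrix $M\in\mathbb{R}^{q\times q}$, relaxation parameters $s_1\in\mathbb{R}$, $s_2,\dots,s_q\in(0,2]$, and $\epsilon\in\mathbb{R}^q$ with $\epsilon_1=1$. Set $K:=I_q+\mathrm{diag}(s_1,\dots,s_q)(\epsilon e_1^{\mathsf T}-I_q)$ and, for $\kappa\in\mathbb{C}\setminus\{0\}$, $\hat{E}(\kappa):=M\,\mathrm{diag}(\kappa^{-c_1},\dots,\kappa^{-c_q})M^{-1}K$. The coefficients $d_\ell(z)$ are polynomials in $z$; $\det(zI_q-\hat{E}(\kappa))$ is a Laurent polynomial in $\kappa$. *)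

theory Defs
  imports "HOL-Analysis.Analysis" "HOL-Computational_Algebra.Polynomial"
begin

text \<open>Index set {1..q} is modelled by a finite type 'n with CARD('n) = q;
  the distinguished index 1 is a fixed element i1 :: 'n.\<close>

definition cmat :: "real^'n^'m \<Rightarrow> complex^'n^'m" where
  "cmat A = (\<chi> i j. complex_of_real (A $ i $ j))"

definition Kmat :: "('n::finite) \<Rightarrow> ('n \<Rightarrow> real) \<Rightarrow> ('n \<Rightarrow> real) \<Rightarrow> real^'n^'n" where
  "Kmat i1 s \<epsilon> = mat 1 + (\<chi> i j. if i = j then s i else 0) **
      ((\<chi> i j. \<epsilon> i * (if j = i1 then 1 else 0)) - mat 1)"

definition Ehat :: "real^'n^'n \<Rightarrow> ('n::finite \<Rightarrow> int) \<Rightarrow> 'n \<Rightarrow> ('n \<Rightarrow> real) \<Rightarrow> ('n \<Rightarrow> real)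
    \<Rightarrow> complex \<Rightarrow> complex^'n^'n" where
  "Ehat M c i1 s \<epsilon> \<kappa> = cmat M ** (\<chi> i j. if i = j then \<kappa> powi (- c i) else 0)
      ** cmat (matrix_inv M) ** cmat (Kmat i1 s \<epsilon>)"

end

theory Submission
  imports Defs
begin

definition laur :: "int \<Rightarrow> int \<Rightarrow> (complex \<Rightarrow> complex) \<Rightarrow> bool" where
  "laur a b f \<longleftrightarrow> (\<exists>g. \<forall>\<kappa>. \<kappa> \<noteq> 0 \<longrightarrow> f \<kappa> = (\<Sum>l=a..b. g l * \<kappa> powi l))"

lemma laurI:
  assumes "\<And>\<kappa>. \<kappa> \<noteq> 0 \<Longrightarrow> f \<kappa> = (\<Sum>l=a..b. g l * \<kappa> powi l)"
  shows "laur a b f"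
  unfolding laur_def using assms by blast

lemma laur_cong:
  assumes "laur a b f" "\<And>\<kappa>. \<kappa> \<noteq> 0 \<Longrightarrow> f \<kappa> = h \<kappa>"
  shows "laur a b h"
  using assms unfolding laur_def by metis

lemma laur_mono:
  assumes "laur a b f" "a' \<le> a" "b \<le> b'"
  shows "laur a' b' f"
proof -
  obtain g where g: "\<And>\<kappa>. \<kappa> \<noteq> 0 \<Longrightarrow> f \<kappa> = (\<Sum>l=a..b. g l * \<kappa> powi l)"
    using assms(1) unfolding laur_def by blast
  have "f \<kappa> = (\<Sum>l=a'..b'. (if l \<in> {a..b} then g l else 0) * \<kappa> powi l)" if "\<kappa> \<noteq> 0" for \<kappa>
  proof -
    have "(\<Sum>l=a'..b'. (if l \<in> {a..b} then g l else 0) * \<kappa> powi l)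
        = (\<Sum>l=a'..b'. (if l \<in> {a..b} then g l * \<kappa> powi l else 0))"
      by (rule sum.cong) auto
    also have "\<dots> = (\<Sum>l\<in>{a'..b'} \<inter> {a..b}. g l * \<kappa> powi l)"
      by (rule sum.inter_restrict[symmetric]) simp
    also have "{a'..b'} \<inter> {a..b} = {a..b}" using assms by auto
    finally show ?thesis using g[OF that] by simp
  qed
  then show ?thesis by (rule laurI)
qed

lemma laur_add:
  assumes "laur a b f" "laur a b h"
  shows "laur a b (\<lambda>\<kappa>. f \<kappa> + h \<kappa>)"
proof -
  obtain g where g: "\<And>\<kappa>. \<kappa> \<noteq> 0 \<Longrightarrow> f \<kappa> = (\<Sum>l=a..b. g l * \<kappa> powi l)"
    using assms(1) unfolding laur_def by blast
  obtain g2 where g2: "\<And>\<kappa>. \<kappa> \<noteq> 0 \<Longrightarrow> h \<kappa> = (\<Sum>l=a..b. g2 l * \<kappa> powi l)"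
    using assms(2) unfolding laur_def by blast
  have "f \<kappa> + h \<kappa> = (\<Sum>l=a..b. (g l + g2 l) * \<kappa> powi l)" if "\<kappa> \<noteq> 0" for \<kappa>
    using g[OF that] g2[OF that] by (simp add: sum.distrib distrib_right)
  then show ?thesis by (rule laurI)
qed

lemma laur_zero: "laur a b (\<lambda>_. 0)"
  unfolding laur_def by (rule exI[of _ "\<lambda>_. 0"]) simp

lemma laur_monom: "laur m m (\<lambda>\<kappa>. c * \<kappa> powi m)"
  unfolding laur_def by (rule exI[of _ "\<lambda>_. c"]) simp

lemma laur_scale:
  assumes "laur a b f"
  shows "laur a b (\<lambda>\<kappa>. c * f \<kappa>)"
proof -
  obtain g where g: "\<And>\<kappa>. \<kappa> \<noteq> 0 \<Longrightarrow> f \<kappa> = (\<Sum>l=a..b. g l * \<kappa> powi l)"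
    using assms(1) unfolding laur_def by blast
  have "c * f \<kappa> = (\<Sum>l=a..b. (c * g l) * \<kappa> powi l)" if "\<kappa> \<noteq> 0" for \<kappa>
    using g[OF that] by (simp add: sum_distrib_left mult.assoc)
  then show ?thesis by (rule laurI)
qed

lemma laur_sum:
  assumes "finite S" "\<And>i. i \<in> S \<Longrightarrow> laur a b (f i)"
  shows "laur a b (\<lambda>\<kappa>. \<Sum>i\<in>S. f i \<kappa>)"
  using assms
proof (induction S rule: finite_induct)
  case empty
  then show ?case by (simp add: laur_zero)
next
  case (insert x F)
  then show ?case using laur_add[of a b "f x" "\<lambda>\<kappa>. \<Sum>i\<in>F. f i \<kappa>"] by simp
qed

lemma laur_mult:
  assumes "laur a b f" "laur a' b' h"
  shows "laur (a+a') (b+b') (\<lambda>\<kappa>. f \<kappa> * h \<kappa>)"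
proof -
  obtain g where g: "\<And>\<kappa>. \<kappa> \<noteq> 0 \<Longrightarrow> f \<kappa> = (\<Sum>l=a..b. g l * \<kappa> powi l)"
    using assms(1) unfolding laur_def by blast
  obtain g2 where g2: "\<And>\<kappa>. \<kappa> \<noteq> 0 \<Longrightarrow> h \<kappa> = (\<Sum>l=a'..b'. g2 l * \<kappa> powi l)"
    using assms(2) unfolding laur_def by blast
  have L: "laur (a+a') (b+b') (\<lambda>\<kappa>. \<Sum>l=a..b. \<Sum>m=a'..b'. (g l * g2 m) * \<kappa> powi (l+m))"
  proof (intro laur_sum)
    fix l m assume "l \<in> {a..b}" "m \<in> {a'..b'}"
    then show "laur (a+a') (b+b') (\<lambda>\<kappa>. (g l * g2 m) * \<kappa> powi (l+m))"
      by (intro laur_mono[OF laur_monom]) auto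
  qed auto
  show ?thesis
  proof (rule laur_cong[OF L])
    fix \<kappa> :: complex assume k: "\<kappa> \<noteq> 0"
    have "f \<kappa> * h \<kappa> = (\<Sum>l=a..b. \<Sum>m=a'..b'. (g l * \<kappa> powi l) * (g2 m * \<kappa> powi m))"
      unfolding g[OF k] g2[OF k] by (rule sum_product)
    also have "\<dots> = (\<Sum>l=a..b. \<Sum>m=a'..b'. (g l * g2 m) * \<kappa> powi (l+m))"
    proof (intro sum.cong refl)
      fix l m
      have "\<kappa> powi (l+m) = \<kappa> powi l * \<kappa> powi m" using k by (simp add: power_int_add)
      then show "(g l * \<kappa> powi l) * (g2 m * \<kappa> powi m) = (g l * g2 m) * \<kappa> powi (l+m)"
        by (simp only: mult_ac)
    qed
    finally show "(\<Sum>l=a..b. \<Sum>m=a'..b'. (g l * g2 m) * \<kappa> powi (l+m)) = f \<kappa> * h \<kappa>" by simp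
  qed
qed

lemma laur_prod:
  assumes "finite S" "\<And>i. i \<in> S \<Longrightarrow> laur (a i) (b i) (f i)"
  shows "laur (\<Sum>i\<in>S. a i) (\<Sum>i\<in>S. b i) (\<lambda>\<kappa>. \<Prod>i\<in>S. f i \<kappa>)"
  using assms
proof (induction S rule: finite_induct)
  case empty
  have "laur 0 0 (\<lambda>\<kappa>. 1 * \<kappa> powi 0)" by (rule laur_monom)
  then show ?case by simp
next
  case (insert x F)
  then show ?case using laur_mult[of "a x" "b x" "f x" "\<Sum>i\<in>F. a i" "\<Sum>i\<in>F. b i"
      "\<lambda>\<kappa>. \<Prod>i\<in>F. f i \<kappa>"] by simp
qed

lemma laur_uniq:
  fixes h :: "int \<Rightarrow> complex"
  assumes "\<And>\<kappa>. \<kappa> \<noteq> 0 \<Longrightarrow> (\<Sum>l=L..U. h l * \<kappa> powi l) = 0" and l0: "l0 \<in> {L..U}"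
  shows "h l0 = 0"
proof -
  define p where "p = (\<Sum>l\<in>{L..U}. monom (h l) (nat (l - L)))"
  have root: "poly p \<kappa> = 0" if k: "\<kappa> \<noteq> 0" for \<kappa>
  proof -
    have "poly p \<kappa> = (\<Sum>l\<in>{L..U}. h l * \<kappa> ^ nat (l - L))"
      by (simp add: p_def poly_sum poly_monom)
    also have "\<dots> = (\<Sum>l\<in>{L..U}. h l * \<kappa> powi l * \<kappa> powi (- L))"
    proof (rule sum.cong)
      fix l assume "l \<in> {L..U}"
      then have "\<kappa> ^ nat (l - L) = \<kappa> powi (l - L)"
        by (metis power_int_of_nat atLeastAtMost_iff diff_ge_0_iff_ge nat_0_le)
      also have "\<dots> = \<kappa> powi l * \<kappa> powi (- L)"
        using k by (simp add: power_int_add[symmetric])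
      finally show "h l * \<kappa> ^ nat (l - L) = h l * \<kappa> powi l * \<kappa> powi (- L)" by simp
    qed simp
    also have "\<dots> = (\<Sum>l\<in>{L..U}. h l * \<kappa> powi l) * \<kappa> powi (- L)"
      by (simp add: sum_distrib_right)
    also have "\<dots> = 0" using assms(1)[OF k] by simp
    finally show ?thesis .
  qed
  have "p = 0"
  proof (rule ccontr)
    assume "p \<noteq> 0"
    then have "finite {x. poly p x = 0}" by (rule poly_roots_finite)
    moreover have "UNIV - {0} \<subseteq> {x. poly p x = 0}" using root by auto
    ultimately have "finite (UNIV - {0::complex})" by (rule rev_finite_subset)
    then have "finite (UNIV :: complex set)" by simp
    then show False using infinite_UNIV_char_0 by blast
  qed
  have "coeff p (nat (l0 - L)) = (\<Sum>l\<in>{L..U}. if l = l0 then h l else 0)"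
    unfolding p_def coeff_sum
  proof (rule sum.cong)
    fix l assume "l \<in> {L..U}"
    then have "(nat (l - L) = nat (l0 - L)) = (l = l0)" using l0 by auto
    then show "coeff (monom (h l) (nat (l - L))) (nat (l0 - L)) = (if l = l0 then h l else 0)"
      by (simp add: coeff_monom)
  qed simp
  also have "\<dots> = h l0" using l0 by simp
  finally show ?thesis using \<open>p = 0\<close> by simp
qed

lemma cmat_mult: "cmat (A ** B) = cmat A ** cmat B"
  by (simp add: cmat_def matrix_matrix_mult_def vec_eq_iff)

lemma cmat_one: "cmat (mat 1) = mat 1"
  by (simp add: cmat_def mat_def vec_eq_iff)

lemma diag_mult:
  "((\<chi> i j. if i = j then x i else 0) ** (A::complex^'n^'n)) $ k $ j = x k * A $ k $ j"
proof -
  have "((\<chi> i j. if i = j then x i else 0) ** A) $ k $ j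
      = (\<Sum>l\<in>UNIV. (if k = l then x l else 0) * A $ l $ j)"
    by (auto simp: matrix_matrix_mult_def intro!: sum.cong)
  also have "\<dots> = (\<Sum>l\<in>UNIV. if k = l then x k * A $ l $ j else 0)"
    by (rule sum.cong) auto
  also have "\<dots> = x k * A $ k $ j" by simp
  finally show ?thesis .
qed

lemma mz: "((A::'a::comm_ring_1^'n^'n) ** mat z) $ i $ j = A $ i $ j * z"
proof -
  have "((A::'a::comm_ring_1^'n^'n) ** mat z) $ i $ j = (\<Sum>k\<in>UNIV. A $ i $ k * (if k = j then z else 0))"
    by (simp add: matrix_matrix_mult_def mat_def)
  also have "\<dots> = (\<Sum>k\<in>UNIV. if k = j then A $ i $ k * z else 0)"
    by (rule sum.cong) auto
  finally show ?thesis by simp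
qed

lemma zm: "(mat z ** (A::'a::comm_ring_1^'n^'n)) $ i $ j = z * A $ i $ j"
proof -
  have "(mat z ** A) $ i $ j = (\<Sum>k\<in>UNIV. (if i = k then z else 0) * A $ k $ j)"
    by (simp add: matrix_matrix_mult_def mat_def)
  also have "\<dots> = (\<Sum>k\<in>UNIV. if i = k then z * A $ k $ j else 0)"
    by (rule sum.cong) auto
  finally show ?thesis by simp
qed

lemma mat_comm: "(A::'a::comm_ring_1^'n^'n) ** mat z = mat z ** A"
  by (simp add: vec_eq_iff mz zm mult.commute)

lemma sub_l: "(A::'a::comm_ring_1^'n^'n) ** (B - C) = A ** B - A ** C"
  by (simp add: matrix_matrix_mult_def vec_eq_iff algebra_simps sum_subtractf)

lemma sub_r: "((B::'a::comm_ring_1^'n^'n) - C) ** A = B ** A - C ** A"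
  by (simp add: matrix_matrix_mult_def vec_eq_iff algebra_simps sum_subtractf)

theorem mainTheorem3:
  fixes M :: "real^'n^'n" and c :: "'n \<Rightarrow> int" and i1 :: 'n
    and s \<epsilon> :: "'n \<Rightarrow> real"
    and d :: "int \<Rightarrow> complex poly" and rb pb :: int
  assumes "CARD('n) \<ge> 2"
    and "invertible M"
    and "\<And>i. i \<noteq> i1 \<Longrightarrow> 0 < s i \<and> s i \<le> 2"
    and "\<epsilon> i1 = 1"
    and "- rb \<le> pb"
    and expand: "\<And>z \<kappa>. \<kappa> \<noteq> 0 \<Longrightarrow>
           det ((mat z) - Ehat M c i1 s \<epsilon> \<kappa>)
             = (\<Sum>l = - rb..pb. poly (d l) z * \<kappa> powi l)"
    and "d (- rb) \<noteq> 0" and "d pb \<noteq> 0"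
  shows "rb \<le> (\<Sum>i \<in> {i. c i > 0}. c i) \<and> pb \<le> - (\<Sum>i \<in> {i. c i < 0}. c i)"
proof -
  define Mc where "Mc = cmat M"
  define Mi where "Mi = cmat (matrix_inv M)"
  define A where "A = Mi ** cmat (Kmat i1 s \<epsilon>) ** Mc"
  define D where "D = (\<lambda>\<kappa>::complex. (\<chi> i j. if i = j then \<kappa> powi (- c i) else 0) :: complex^'n^'n)"
  have inv: "M ** matrix_inv M = mat 1 \<and> matrix_inv M ** M = mat 1"
    using assms(2) unfolding invertible_def matrix_inv_def by (rule someI_ex)
  have MMi: "Mc ** Mi = mat 1" and MiM: "Mi ** Mc = mat 1"
    using inv by (simp_all add: Mc_def Mi_def cmat_mult[symmetric] cmat_one)
  define P where "P = (\<Sum>i \<in> {i. c i > 0}. c i)"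
  define N where "N = - (\<Sum>i \<in> {i. c i < 0}. c i)"
  have sumP: "(\<Sum>k\<in>UNIV. min 0 (- c k)) = - P"
  proof -
    have "(\<Sum>k\<in>UNIV. min 0 (- c k)) = - (\<Sum>k\<in>UNIV. if c k > 0 then c k else 0)"
      by (simp add: sum_negf[symmetric] min_def) (rule sum.cong, auto)
    also have "(\<Sum>k\<in>UNIV. if c k > 0 then c k else 0) = P"
      unfolding P_def by (simp add: sum.inter_filter[symmetric])
    finally show ?thesis .
  qed
  have sumN: "(\<Sum>k\<in>UNIV. max 0 (- c k)) = N"
  proof -
    have "(\<Sum>k\<in>UNIV. max 0 (- c k)) = - (\<Sum>k\<in>UNIV. if c k < 0 then c k else 0)"
      by (simp add: sum_negf[symmetric] max_def) (rule sum.cong, auto)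
    also have "(\<Sum>k\<in>UNIV. if c k < 0 then c k else 0) = - N"
      unfolding N_def by (simp add: sum.inter_filter[symmetric])
    finally show ?thesis by simp
  qed
  have key: "laur (- P) N (\<lambda>\<kappa>. det (mat z - Ehat M c i1 s \<epsilon> \<kappa>))" for z
  proof -
    have sim: "det (mat z - Ehat M c i1 s \<epsilon> \<kappa>) = det (mat z - D \<kappa> ** A)" for \<kappa>
    proof -
      have e1: "Mc ** mat z ** Mi = mat z"
      proof -
        have "Mc ** mat z ** Mi = mat z ** Mc ** Mi" by (simp add: mat_comm)
        also have "\<dots> = mat z ** (Mc ** Mi)" by (simp add: matrix_mul_assoc)
        finally show ?thesis by (simp add: MMi)
      qed
      have e2: "Mc ** (D \<kappa> ** A) ** Mi = Ehat M c i1 s \<epsilon> \<kappa>"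
      proof -
        have "Mc ** (D \<kappa> ** A) ** Mi = Mc ** D \<kappa> ** Mi ** cmat (Kmat i1 s \<epsilon>) ** (Mc ** Mi)"
          unfolding A_def by (simp only: matrix_mul_assoc)
        also have "\<dots> = Ehat M c i1 s \<epsilon> \<kappa>"
          by (simp only: MMi matrix_mul_rid) (simp add: Ehat_def D_def Mc_def Mi_def)
        finally show ?thesis .
      qed
      have "mat z - Ehat M c i1 s \<epsilon> \<kappa> = Mc ** (mat z - D \<kappa> ** A) ** Mi"
        by (simp only: sub_l sub_r e1 e2)
      then have "det (mat z - Ehat M c i1 s \<epsilon> \<kappa>) = det Mc * det (mat z - D \<kappa> ** A) * det Mi"
        by (simp add: det_mul)
      also have "\<dots> = det (mat z - D \<kappa> ** A) * det (Mc ** Mi)"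
        by (simp add: det_mul)
      finally show ?thesis by (simp add: MMi)
    qed
    have entry: "laur (min 0 (- c k)) (max 0 (- c k)) (\<lambda>\<kappa>. (mat z - D \<kappa> ** A) $ k $ j)" for k j
    proof -
      have "laur (min 0 (- c k)) (max 0 (- c k))
          (\<lambda>\<kappa>. (if k = j then z else 0) * \<kappa> powi 0 + (- A $ k $ j) * \<kappa> powi (- c k))"
        by (intro laur_add laur_mono[OF laur_monom]) auto
      then show ?thesis
        by (rule laur_cong) (simp add: D_def diag_mult mat_def)
    qed
    have "laur (- P) N (\<lambda>\<kappa>. det (mat z - D \<kappa> ** A))"
      unfolding det_def
    proof (intro laur_sum laur_scale)
      fix p assume "p \<in> {p. p permutes (UNIV::'n set)}"
      show "laur (- P) N (\<lambda>\<kappa>. \<Prod>i\<in>UNIV. (mat z - D \<kappa> ** A) $ i $ p i)"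
        using laur_prod[of UNIV "\<lambda>k. min 0 (- c k)" "\<lambda>k. max 0 (- c k)"
            "\<lambda>i \<kappa>. (mat z - D \<kappa> ** A) $ i $ p i"] entry sumP sumN by simp
    qed simp
    then show ?thesis using sim by simp
  qed
  have nonroot: "\<exists>z. poly q z \<noteq> 0" if "q \<noteq> 0" for q :: "complex poly"
  proof (rule ccontr)
    assume "\<not> ?thesis"
    then have "poly q = poly 0" by auto
    then show False using that poly_eq_poly_eq_iff by blast
  qed
  have bound: "L \<le> l0 \<and> l0 \<le> U" if lr: "l0 \<in> {- rb..pb}" and dq: "d l0 \<noteq> 0"
    and LU: "L = - P" "U = N" for l0 L U
  proof (rule ccontr)
    assume out: "\<not> (L \<le> l0 \<and> l0 \<le> U)"
    obtain z where z: "poly (d l0) z \<noteq> 0" using nonroot[OF dq] by blast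
    obtain g where g: "\<And>\<kappa>. \<kappa> \<noteq> 0 \<Longrightarrow> det (mat z - Ehat M c i1 s \<epsilon> \<kappa>) = (\<Sum>l=-P..N. g l * \<kappa> powi l)"
      using key[of z] unfolding laur_def by blast
    define lo where "lo = min (- rb) (- P)"
    define hi where "hi = max pb N"
    define h where "h = (\<lambda>l. (if l \<in> {- rb..pb} then poly (d l) z else 0)
                         - (if l \<in> {- P..N} then g l else 0))"
    have "(\<Sum>l=lo..hi. h l * \<kappa> powi l) = 0" if k: "\<kappa> \<noteq> 0" for \<kappa>
    proof -
      have e1: "(\<Sum>l=lo..hi. (if l \<in> {- rb..pb} then poly (d l) z else 0) * \<kappa> powi l)
          = (\<Sum>l = - rb..pb. poly (d l) z * \<kappa> powi l)"
      proof -
        have "(\<Sum>l=lo..hi. (if l \<in> {- rb..pb} then poly (d l) z else 0) * \<kappa> powi l)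
           = (\<Sum>l=lo..hi. (if l \<in> {- rb..pb} then poly (d l) z * \<kappa> powi l else 0))"
          by (rule sum.cong) auto
        also have "\<dots> = (\<Sum>l\<in>{lo..hi} \<inter> {- rb..pb}. poly (d l) z * \<kappa> powi l)"
          by (rule sum.inter_restrict[symmetric]) simp
        also have "{lo..hi} \<inter> {- rb..pb} = {- rb..pb}" unfolding lo_def hi_def by auto
        finally show ?thesis .
      qed
      have e2: "(\<Sum>l=lo..hi. (if l \<in> {- P..N} then g l else 0) * \<kappa> powi l)
          = (\<Sum>l = - P..N. g l * \<kappa> powi l)"
      proof -
        have "(\<Sum>l=lo..hi. (if l \<in> {- P..N} then g l else 0) * \<kappa> powi l)
           = (\<Sum>l=lo..hi. (if l \<in> {- P..N} then g l * \<kappa> powi l else 0))"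
          by (rule sum.cong) auto
        also have "\<dots> = (\<Sum>l\<in>{lo..hi} \<inter> {- P..N}. g l * \<kappa> powi l)"
          by (rule sum.inter_restrict[symmetric]) simp
        also have "{lo..hi} \<inter> {- P..N} = {- P..N}" unfolding lo_def hi_def by auto
        finally show ?thesis .
      qed
      have "(\<Sum>l=lo..hi. h l * \<kappa> powi l)
          = (\<Sum>l=lo..hi. (if l \<in> {- rb..pb} then poly (d l) z else 0) * \<kappa> powi l)
            - (\<Sum>l=lo..hi. (if l \<in> {- P..N} then g l else 0) * \<kappa> powi l)"
        unfolding h_def by (simp add: left_diff_distrib sum_subtractf)
      also have "\<dots> = 0" using e1 e2 expand[OF k, of z] g[OF k] by simp
      finally show ?thesis .
    qed
    moreover have "l0 \<in> {lo..hi}" using lr unfolding lo_def hi_def by auto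
    ultimately have "h l0 = 0" by (rule laur_uniq)
    moreover have "h l0 = poly (d l0) z" using lr out LU unfolding h_def by auto
    ultimately show False using z by simp
  qed
  have "- P \<le> - rb" using bound[of "- rb" "- P" N] assms(5) assms(7) by auto
  moreover have "pb \<le> N" using bound[of pb "- P" N] assms(5) assms(8) by auto
  ultimately show ?thesis unfolding P_def N_def by simp
qed

end
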